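(* Let $B$ be a symmetric positive definite $3\times3$ matrix with $\det B=1$. Then for every symmetric $3\times3$ matrix $M$, $$\operatorname{tr}(B^{-1}\cdot M)=2\operatorname{tr}\big(\mathbb C(B):M\big).$$ Consequently, for a differentiable path $B(t)$ of symmetric positive definite matrices with $\det B(0)=1$ and $A(t)=A(B(t))$, $\operatorname{tr}A$ is constant in $t$ if and only if $\det B$ is constant in $t$.
   Context: For a symmetric positive definite matrix $B$, $$A(B)=\tfrac12\int_0^\infty \frac{(B+sI)^{-1}\,ds}{\sqrt{\det(B+sI)}},\qquad \mathbb C(B)=\tfrac34\int_0^\infty\frac{\mathcal S\big((B+sI)^{-1}\otimes(B+sI)^{-1}\big)\,ds}{\sqrt{\det(B+sI)}},$$ where $\mathcal S(\mathbb T)_{ijkl}$ is the average of $\mathbb T_{mnpq}$ over all permutations $(m,n,p,q)$ of $(i,j,k,l)$, and $(\mathbb T:M)_{ij}=\sum_{k,l}\mathbb T_{ijkl}M_{kl}$. *)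

theory Defs
  imports "HOL-Analysis.Analysis"
begin

type_synonym mat3 = "real^3^3"
type_synonym tensor4 = "real^3^3^3^3"

definition sym_mat :: "mat3 \<Rightarrow> bool" where
  "sym_mat M \<longleftrightarrow> transpose M = M"

definition pos_def :: "mat3 \<Rightarrow> bool" where
  "pos_def B \<longleftrightarrow> sym_mat B \<and> (\<forall>x::real^3. x \<noteq> 0 \<longrightarrow> x \<bullet> (B *v x) > 0)"

definition tprod :: "mat3 \<Rightarrow> mat3 \<Rightarrow> tensor4" where
  "tprod P Q = (\<chi> i j k l. P $ i $ j * Q $ k $ l)"

definition symz :: "tensor4 \<Rightarrow> tensor4" where
  "symz T = (\<chi> i j k l. (let x = [i, j, k, l] in
      (\<Sum>p\<in>{p. p permutes {0..<4::nat}}. T $ (x ! p 0) $ (x ! p 1) $ (x ! p 2) $ (x ! p 3)) / 24))"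

definition contr :: "tensor4 \<Rightarrow> mat3 \<Rightarrow> mat3" where
  "contr T M = (\<chi> i j. \<Sum>k\<in>UNIV. \<Sum>l\<in>UNIV. T $ i $ j $ k $ l * M $ k $ l)"

definition tensA :: "mat3 \<Rightarrow> mat3" where
  "tensA B = (1/2) *\<^sub>R integral {0..}
     (\<lambda>s::real. (1 / sqrt (det (B + s *\<^sub>R mat 1))) *\<^sub>R matrix_inv (B + s *\<^sub>R mat 1))"

definition tensC :: "mat3 \<Rightarrow> tensor4" where
  "tensC B = (3/4) *\<^sub>R integral {0..}
     (\<lambda>s::real. (1 / sqrt (det (B + s *\<^sub>R mat 1))) *\<^sub>R
        symz (tprod (matrix_inv (B + s *\<^sub>R mat 1)) (matrix_inv (B + s *\<^sub>R mat 1))))"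

end

theory Submission
  imports Defs
begin


lemma perm4_sum:
  fixes g :: "nat \<Rightarrow> nat \<Rightarrow> nat \<Rightarrow> nat \<Rightarrow> 'a::comm_monoid_add"
  shows "(\<Sum>p\<in>{p. p permutes {0..<4::nat}}. g (p 0) (p 1) (p 2) (p 3)) =
   g 0 1 2 3 + g 0 1 3 2 + g 0 2 1 3 + g 0 2 3 1 + g 0 3 1 2 + g 0 3 2 1 +
   g 1 0 2 3 + g 1 0 3 2 + g 1 2 0 3 + g 1 2 3 0 + g 1 3 0 2 + g 1 3 2 0 +
   g 2 0 1 3 + g 2 0 3 1 + g 2 1 0 3 + g 2 1 3 0 + g 2 3 0 1 + g 2 3 1 0 +
   g 3 0 1 2 + g 3 0 2 1 + g 3 1 0 2 + g 3 1 2 0 + g 3 2 0 1 + g 3 2 1 0"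
proof -
  have e: "{0..<4::nat} = insert 0 (insert 1 (insert 2 {3}))" by auto
  have f1: "finite (insert 1 (insert 2 {3::nat}))" "0 \<notin> insert 1 (insert 2 {3::nat})" by auto
  have f2: "finite (insert 2 {3::nat})" "1 \<notin> insert 2 {3::nat}" by auto
  have f3: "finite {3::nat}" "2 \<notin> {3::nat}" by auto
  show ?thesis
    unfolding e sum_over_permutations_insert[OF f1] sum_over_permutations_insert[OF f2]
      sum_over_permutations_insert[OF f3] permutes_sing
    by (simp add: Transposition.transpose_def add_ac)
qed




lemma ftc_nonneg_inf:
  fixes F f :: "real \<Rightarrow> real"
  assumes der: "\<And>s. 0 \<le> s \<Longrightarrow> (F has_real_derivative f s) (at s within {0..})"
    and nn: "\<And>s. 0 \<le> s \<Longrightarrow> 0 \<le> f s"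
    and lim: "(F \<longlongrightarrow> L) at_top"
  shows "(f has_integral (L - F 0)) {0..}"
proof -
  have hi: "(f has_integral (F y - F 0)) {0..y}" if "0 \<le> y" for y
  proof (rule fundamental_theorem_of_calculus[OF that])
    fix x assume x: "x \<in> {0..y}"
    have "(F has_real_derivative f x) (at x within {0..})" using der x by auto
    then have "(F has_real_derivative f x) (at x within {0..y})"
      by (rule DERIV_subset) auto
    then show "(F has_vector_derivative f x) (at x within {0..y})"
      by (simp add: has_real_derivative_iff_has_vector_derivative)
  qed
  show ?thesis
  proof (rule has_integral_to_inf)
    show "f integrable_on {0..y}" for y
      using hi[of y] by (cases "0 \<le> y") (auto simp: integrable_on_def)
    have "\<forall>\<^sub>F y in at_top. integral {0..y} f = F y - F 0"
      using hi by (intro eventually_at_top_linorderI[of 0]) (auto intro: integral_unique)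
    moreover have "((\<lambda>y. F y - F 0) \<longlongrightarrow> L - F 0) at_top"
      by (intro tendsto_intros lim)
    ultimately show "((\<lambda>y. integral {0..y} f) \<longlongrightarrow> L - F 0) at_top"
      by (simp add: filterlim_cong tendsto_cong)
  qed (use nn in auto)
qed

lemma dom_integrable:
  fixes K :: real
  shows "(\<lambda>s. K / (1+s)^2) integrable_on {0..}"
proof -
  have "((\<lambda>s::real. 1 / (1+s)^2) has_integral (0 - (-1/(1+0)))) {0..}"
  proof (rule ftc_nonneg_inf[where F="\<lambda>s. -1/(1+s)"])
    show "((\<lambda>s. -1/(1+s)) has_real_derivative 1/(1+s)^2) (at s within {0..})" if "0 \<le> s" for s :: real
      using that by (auto intro!: derivative_eq_intros simp: power2_eq_square)
    show "((\<lambda>s::real. -1/(1+s)) \<longlongrightarrow> 0) at_top" by real_asymp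
  qed auto
  then have "(\<lambda>s::real. 1 / (1+s)^2) integrable_on {0..}" by (auto simp: integrable_on_def)
  from integrable_cmul[OF this, of K] show ?thesis by (simp add: divide_inverse)
qed

lemma bounded_integrable:
  fixes h :: "real \<Rightarrow> real"
  assumes c: "continuous_on {0..} h" and b: "\<And>s. 0 \<le> s \<Longrightarrow> \<bar>h s\<bar> \<le> K / (1+s)^2"
  shows "h integrable_on {0..}"
proof (rule measurable_bounded_by_integrable_imp_integrable)
  show "h \<in> borel_measurable (lebesgue_on {0..})"
    by (rule continuous_imp_measurable_on_sets_lebesgue[OF c]) auto
qed (use dom_integrable b in auto)

lemma ftc_inf:
  fixes F f :: "real \<Rightarrow> real"
  assumes der: "\<And>s. 0 \<le> s \<Longrightarrow> (F has_real_derivative f s) (at s within {0..})"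
    and b: "\<And>s. 0 \<le> s \<Longrightarrow> \<bar>f s\<bar> \<le> K / (1+s)^2"
    and lim: "(F \<longlongrightarrow> 0) at_top"
  shows "(f has_integral (- F 0)) {0..}"
proof -
  have K: "0 \<le> K" using b[of 0] by auto
  have g: "((\<lambda>s. K / (1+s)^2) has_integral (0 - (-K/(1+0)))) {0..}"
  proof (rule ftc_nonneg_inf[where F="\<lambda>s. -K/(1+s)"])
    show "((\<lambda>s. -K/(1+s)) has_real_derivative K/(1+s)^2) (at s within {0..})" if "0 \<le> s" for s :: real
      using that by (auto intro!: derivative_eq_intros simp: power2_eq_square)
    show "((\<lambda>s::real. -K/(1+s)) \<longlongrightarrow> 0) at_top" by real_asymp
  qed (use K in auto)
  have fg: "((\<lambda>s. f s + K / (1+s)^2) has_integral (0 - (F 0 + (-K/(1+0))))) {0..}"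
  proof (rule ftc_nonneg_inf[where F="\<lambda>s. F s + -K/(1+s)"])
    show "((\<lambda>s. F s + -K/(1+s)) has_real_derivative f s + K/(1+s)^2) (at s within {0..})" if "0 \<le> s" for s :: real
      using that der[OF that] by (auto intro!: derivative_eq_intros simp: power2_eq_square)
    show "((\<lambda>s::real. F s + -K/(1+s)) \<longlongrightarrow> 0) at_top"
    proof -
      have "((\<lambda>s::real. -K/(1+s)) \<longlongrightarrow> 0) at_top" by real_asymp
      from tendsto_add[OF lim this] show ?thesis by simp
    qed
    show "0 \<le> f s + K / (1+s)^2" if "0 \<le> s" for s using b[OF that] by linarith
  qed
  from has_integral_diff[OF fg g] show ?thesis by simp
qed




definition adj3 :: "mat3 \<Rightarrow> mat3" where
  "adj3 a = vector [
     vector [a$2$2*a$3$3 - a$2$3*a$3$2, a$1$3*a$3$2 - a$1$2*a$3$3, a$1$2*a$2$3 - a$1$3*a$2$2],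
     vector [a$2$3*a$3$1 - a$2$1*a$3$3, a$1$1*a$3$3 - a$1$3*a$3$1, a$1$3*a$2$1 - a$1$1*a$2$3],
     vector [a$2$1*a$3$2 - a$2$2*a$3$1, a$1$2*a$3$1 - a$1$1*a$3$2, a$1$1*a$2$2 - a$1$2*a$2$1]]"

lemma mat1_entries: "(mat 1 :: mat3) $ i $ j = (if i = j then 1 else 0)"
  by (simp add: mat_def)

lemma Xe: "(B + s *\<^sub>R mat 1 :: mat3) $ i $ j = B$i$j + (if i = j then s else 0)"
  by (simp add: mat_def)

lemma adj3_right: "a ** adj3 a = det a *\<^sub>R mat 1"
  unfolding vec_eq_iff forall_3
  by (simp add: adj3_def matrix_matrix_mult_def sum_3 det_3 mat1_entries algebra_simps)

lemma adj3_left: "adj3 a ** a = det a *\<^sub>R mat 1"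
  unfolding vec_eq_iff forall_3
  by (simp add: adj3_def matrix_matrix_mult_def sum_3 det_3 mat1_entries algebra_simps)

lemma matrix_inv_adj3:
  assumes "det a \<noteq> 0"
  shows "matrix_inv a = (1 / det a) *\<^sub>R adj3 a"
proof -
  let ?A = "(1 / det a) *\<^sub>R adj3 a"
  have s1: "a ** ?A = (1 / det a) *\<^sub>R (a ** adj3 a)" "?A ** a = (1 / det a) *\<^sub>R (adj3 a ** a)"
    by (simp_all add: vec_eq_iff matrix_matrix_mult_def sum_distrib_left algebra_simps)
  have r: "a ** ?A = mat 1" and l: "?A ** a = mat 1"
    unfolding s1 adj3_right adj3_left using assms by simp_all
  have "a ** matrix_inv a = mat 1 \<and> matrix_inv a ** a = mat 1"
    unfolding matrix_inv_def by (rule someI[of _ ?A]) (use r l in auto)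
  then have "matrix_inv a = matrix_inv a ** (a ** ?A)" by (simp add: r)
  also have "\<dots> = ?A" using \<open>a ** matrix_inv a = mat 1 \<and> matrix_inv a ** a = mat 1\<close>
    by (simp add: matrix_mul_assoc)
  finally show ?thesis .
qed

lemma linear_axis: "linear (axis i :: 'a::real_vector \<Rightarrow> 'a^'n)"
  by (rule linearI) (auto simp: axis_def vec_eq_iff)

lemma integrable_vec:
  fixes f :: "real \<Rightarrow> ('a::euclidean_space)^'n"
  assumes "\<And>i. (\<lambda>x. f x $ i) integrable_on S"
  shows "f integrable_on S"
proof -
  have e: "f x = (\<Sum>i\<in>UNIV. axis i (f x $ i))" for x
    by (simp add: vec_eq_iff axis_def if_distrib cong: if_cong)
  have "(\<lambda>x. \<Sum>i\<in>UNIV. axis i (f x $ i)) integrable_on S"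
  proof (rule integrable_sum)
    fix i
    have "bounded_linear (axis i :: 'a \<Rightarrow> 'a^'n)"
      by (rule linear_conv_bounded_linear[THEN iffD1, OF linear_axis])
    from integrable_linear[OF assms this] show "(\<lambda>x. axis i (f x $ i)) integrable_on S"
      by (simp add: o_def)
  qed auto
  then show ?thesis by (subst (asm) e[symmetric]) 
qed

lemma bl_trace: "bounded_linear (trace :: mat3 \<Rightarrow> real)"
proof -
  have "linear (trace :: mat3 \<Rightarrow> real)"
    by (rule linearI) (simp_all add: trace_def sum.distrib sum_distrib_left)
  then show ?thesis using linear_conv_bounded_linear by blast
qed

lemma bl_trcontr: "bounded_linear (\<lambda>T. trace (contr T M))"
proof -
  have "linear (\<lambda>T. trace (contr T M))"
    by (rule linearI) (simp_all add: trace_def contr_def sum.distrib sum_distrib_left algebra_simps)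
  then show ?thesis using linear_conv_bounded_linear by blast
qed





lemma D1: "((\<lambda>s. det (B + s *\<^sub>R mat 1 :: mat3)) has_real_derivative trace (adj3 (B + s *\<^sub>R mat 1))) (at s within S)"
  apply (simp add: det_3 Xe trace_def sum_3 adj3_def mat1_entries)
  apply (rule derivative_eq_intros refl | simp)+
  apply (simp add: algebra_simps)
  done

lemma D2: "((\<lambda>s. trace (adj3 (B + s *\<^sub>R mat 1 :: mat3) ** M)) has_real_derivative
   trace (B + s *\<^sub>R mat 1) * trace M - trace ((B + s *\<^sub>R mat 1) ** M)) (at s within S)"
  apply (simp add: Xe trace_def sum_3 adj3_def mat1_entries matrix_matrix_mult_def)
  apply (rule derivative_eq_intros refl | simp)+
  apply (simp add: algebra_simps)
  done

lemma ID: "det a * (trace a * trace M - trace(a ** M)) =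
   trace (adj3 a) * trace (adj3 a ** M) - trace (adj3 a ** adj3 a ** M)"
  by (simp add: det_3 trace_def sum_3 adj3_def matrix_matrix_mult_def algebra_simps)




lemma sym_entries:
  assumes "sym_mat R"
  shows "R$2$1 = R$1$2" "R$3$1 = R$1$3" "R$3$2 = R$2$3"
proof -
  have "transpose R $ i $ j = R $ i $ j" for i j using assms by (simp add: sym_mat_def)
  then have "R $ j $ i = R $ i $ j" for i j by (simp add: transpose_def)
  then show "R$2$1 = R$1$2" "R$3$1 = R$1$3" "R$3$2 = R$2$3" by auto
qed

lemma QF: fixes B :: mat3 shows "(vector[x1,x2,x3]::real^3) \<bullet> (B *v vector[x1,x2,x3]) =
   x1*(B$1$1*x1 + B$1$2*x2 + B$1$3*x3) + x2*(B$2$1*x1 + B$2$2*x2 + B$2$3*x3) + x3*(B$3$1*x1 + B$3$2*x2 + B$3$3*x3)"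
  by (simp add: inner_vec_def matrix_vector_mult_def sum_3)

lemma posdef_test:
  fixes B :: mat3
  assumes "pos_def B" "x1 \<noteq> 0 \<or> x2 \<noteq> 0 \<or> x3 \<noteq> 0"
  shows "0 < x1*(B$1$1*x1 + B$1$2*x2 + B$1$3*x3) + x2*(B$2$1*x1 + B$2$2*x2 + B$2$3*x3) + x3*(B$3$1*x1 + B$3$2*x2 + B$3$3*x3)"
proof -
  have "(vector[x1,x2,x3]::real^3) \<noteq> 0"
  proof
    assume h: "(vector[x1,x2,x3]::real^3) = 0"
    have "(vector[x1,x2,x3]::real^3)$1 = 0" "(vector[x1,x2,x3]::real^3)$2 = 0" "(vector[x1,x2,x3]::real^3)$3 = 0"
      by (simp_all add: h)
    then show False using assms(2) by simp
  qed
  then have "0 < (vector[x1,x2,x3]::real^3) \<bullet> (B *v vector[x1,x2,x3])"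
    using assms(1) unfolding pos_def_def by blast
  then show ?thesis unfolding QF .
qed

lemma posdef_coeffs:
  assumes P: "pos_def B"
  shows "0 < B$1$1 + B$2$2 + B$3$3"
    "0 < (B$1$1*B$2$2 - B$1$2^2) + (B$1$1*B$3$3 - B$1$3^2) + (B$2$2*B$3$3 - B$2$3^2)"
    "0 < det B"
proof -
  have S: "sym_mat B" using P by (simp add: pos_def_def)
  note s = sym_entries[OF S]
  have d1: "0 < B$1$1" using posdef_test[OF P, of 1 0 0] by simp
  have d2: "0 < B$2$2" using posdef_test[OF P, of 0 1 0] by simp
  have d3: "0 < B$3$3" using posdef_test[OF P, of 0 0 1] by simp
  show "0 < B$1$1 + B$2$2 + B$3$3" using d1 d2 d3 by simp
  have "0 < B$1$1 * (B$1$1*B$2$2 - B$1$2^2)"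
    using posdef_test[OF P, of "-B$1$2" "B$1$1" 0] d1 s by (simp add: algebra_simps power2_eq_square)
  then have m12: "0 < B$1$1*B$2$2 - B$1$2^2" using d1 by (simp add: zero_less_mult_iff)
  have "0 < B$1$1 * (B$1$1*B$3$3 - B$1$3^2)"
    using posdef_test[OF P, of "-B$1$3" 0 "B$1$1"] d1 s by (simp add: algebra_simps power2_eq_square)
  then have m13: "0 < B$1$1*B$3$3 - B$1$3^2" using d1 by (simp add: zero_less_mult_iff)
  have "0 < B$2$2 * (B$2$2*B$3$3 - B$2$3^2)"
    using posdef_test[OF P, of 0 "-B$2$3" "B$2$2"] d2 s by (simp add: algebra_simps power2_eq_square)
  then have m23: "0 < B$2$2*B$3$3 - B$2$3^2" using d2 by (simp add: zero_less_mult_iff)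
  show "0 < (B$1$1*B$2$2 - B$1$2^2) + (B$1$1*B$3$3 - B$1$3^2) + (B$2$2*B$3$3 - B$2$3^2)"
    using m12 m13 m23 by simp
  have "0 < (B$2$2*B$3$3 - B$2$3^2) * det B"
    using posdef_test[OF P, of "adj3 B $1$1" "adj3 B $2$1" "adj3 B $3$1"] m23 s
    by (simp add: adj3_def det_3 algebra_simps power2_eq_square)
  then show "0 < det B" using m23 by (simp add: zero_less_mult_iff)
qed

lemma det_shift: "sym_mat B \<Longrightarrow> det (B + s *\<^sub>R mat 1 :: mat3) =
   s^3 + (B$1$1 + B$2$2 + B$3$3) * s^2 +
   ((B$1$1*B$2$2 - B$1$2^2) + (B$1$1*B$3$3 - B$1$3^2) + (B$2$2*B$3$3 - B$2$3^2)) * s + det B"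
  by (simp add: sym_entries det_3 mat_def power2_eq_square power3_eq_cube algebra_simps)

lemma posdef_lower:
  assumes P: "pos_def B"
  obtains m where "m > 0" "\<And>s. 0 \<le> s \<Longrightarrow> m * (1+s)^3 \<le> det (B + s *\<^sub>R mat 1)"
proof -
  define a where "a = B$1$1 + B$2$2 + B$3$3"
  define b where "b = (B$1$1*B$2$2 - B$1$2^2) + (B$1$1*B$3$3 - B$1$3^2) + (B$2$2*B$3$3 - B$2$3^2)"
  define c where "c = det B"
  have a: "0 < a" and b: "0 < b" and c: "0 < c" using posdef_coeffs[OF P] by (auto simp: a_def b_def c_def)
  define m where "m = min 1 (min (a/3) (min (b/3) c))"
  have m: "0 < m" using a b c by (simp add: m_def)
  have "m * (1+s)^3 \<le> det (B + s *\<^sub>R mat 1)" if s: "0 \<le> s" for s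
  proof -
    have e: "det (B + s *\<^sub>R mat 1) = s^3 + a * s^2 + b * s + c"
      using det_shift[of B s] P by (simp add: pos_def_def a_def b_def c_def)
    have "m * s^3 \<le> 1 * s^3" by (rule mult_right_mono) (use s in \<open>auto simp: m_def\<close>)
    moreover have "3 * m * s^2 \<le> a * s^2" by (rule mult_right_mono) (auto simp: m_def)
    moreover have "3 * m * s \<le> b * s" by (rule mult_right_mono) (use s in \<open>auto simp: m_def\<close>)
    moreover have "m \<le> c" by (simp add: m_def)
    ultimately show ?thesis unfolding e by (simp add: power3_eq_cube power2_eq_square algebra_simps)
  qed
  with m that show ?thesis by blast
qed


lemma symz_trace:
  assumes R: "sym_mat R" and M: "sym_mat M"
  shows "trace (contr (symz (tprod R R)) M) =
     (trace R * trace (R ** M) + 2 * trace (R ** R ** M)) / 3"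
proof -
  note sR = sym_entries[OF R] and sM = sym_entries[OF M]
  have P: "(\<Sum>p\<in>{p. p permutes {0..<4::nat}}. tprod R R $ (x ! p 0) $ (x ! p 1) $ (x ! p 2) $ (x ! p 3))
     = (let h = (\<lambda>a b c d. tprod R R $ (x ! a) $ (x ! b) $ (x ! c) $ (x ! d)) in
   h 0 1 2 3 + h 0 1 3 2 + h 0 2 1 3 + h 0 2 3 1 + h 0 3 1 2 + h 0 3 2 1 +
   h 1 0 2 3 + h 1 0 3 2 + h 1 2 0 3 + h 1 2 3 0 + h 1 3 0 2 + h 1 3 2 0 +
   h 2 0 1 3 + h 2 0 3 1 + h 2 1 0 3 + h 2 1 3 0 + h 2 3 0 1 + h 2 3 1 0 +
   h 3 0 1 2 + h 3 0 2 1 + h 3 1 0 2 + h 3 1 2 0 + h 3 2 0 1 + h 3 2 1 0)" for x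
    unfolding Let_def by (rule perm4_sum)
  show ?thesis
    unfolding trace_def contr_def symz_def
    apply (simp only: vec_lambda_beta Let_def P)
    apply (simp add: tprod_def sum_3 matrix_matrix_mult_def sR sM)
    apply (simp add: field_simps)
    done
qed




lemma abs_diff_prod_le:
  fixes x y z w L :: real
  assumes "\<bar>x\<bar> \<le> L" "\<bar>y\<bar> \<le> L" "\<bar>z\<bar> \<le> L" "\<bar>w\<bar> \<le> L"
  shows "\<bar>x*y - z*w\<bar> \<le> 2*L^2"
proof -
  have "\<bar>x*y\<bar> \<le> L*L" unfolding abs_mult by (rule mult_mono) (use assms in auto)
  moreover have "\<bar>z*w\<bar> \<le> L*L" unfolding abs_mult by (rule mult_mono) (use assms in auto)
  ultimately show ?thesis by (simp add: power2_eq_square)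
qed

lemma adj3_bound:
  assumes "\<And>i j. \<bar>a$i$j\<bar> \<le> L"
  shows "\<bar>adj3 a $ i $ j\<bar> \<le> 2*L^2"
proof -
  have h: "\<bar>a$i$j*a$k$l - a$i'$j'*a$k'$l'\<bar> \<le> 2*L^2" for i j k l i' j' k' l'
    by (rule abs_diff_prod_le) (use assms in auto)
  show ?thesis
    using exhaust_3[of i] exhaust_3[of j] by (auto simp: adj3_def h)
qed

lemma entry_le_sum: "\<bar>(B::mat3)$i$j\<bar> \<le> (\<Sum>i\<in>UNIV. \<Sum>j\<in>UNIV. \<bar>B$i$j\<bar>)"
proof -
  have "\<bar>B$i$j\<bar> \<le> (\<Sum>j\<in>UNIV. \<bar>B$i$j\<bar>)" by (rule member_le_sum) auto
  also have "\<dots> \<le> (\<Sum>i\<in>UNIV. \<Sum>j\<in>UNIV. \<bar>B$i$j\<bar>)" by (rule member_le_sum) (auto intro: sum_nonneg)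
  finally show ?thesis .
qed

lemma adjX_bound:
  fixes B :: mat3
  obtains K where "K \<ge> 0" "\<And>s i j. 0 \<le> s \<Longrightarrow> \<bar>adj3 (B + s *\<^sub>R mat 1) $ i $ j\<bar> \<le> K * (1+s)^2"
proof -
  define N where "N = 1 + (\<Sum>i\<in>UNIV. \<Sum>j\<in>UNIV. \<bar>B$i$j\<bar>)"
  have N: "1 \<le> N" unfolding N_def by (auto intro!: sum_nonneg)
  have "\<bar>adj3 (B + s *\<^sub>R mat 1) $ i $ j\<bar> \<le> (2*N^2) * (1+s)^2" if s: "0 \<le> s" for s i j
  proof -
    have "\<bar>(B + s *\<^sub>R mat 1) $ i $ j\<bar> \<le> N*(1+s)" for i j
    proof -
      have e1: "\<bar>(B + s *\<^sub>R mat 1) $ i $ j\<bar> \<le> \<bar>B$i$j\<bar> + s"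
        unfolding Xe using s by auto
      have e2: "\<bar>B$i$j\<bar> \<le> N" using entry_le_sum[of B i j] by (simp add: N_def)
      have e3: "s \<le> N * s" using N s by (simp add: mult_le_cancel_right1)
      show ?thesis using e1 e2 e3 by (simp add: algebra_simps)
    qed
    from adj3_bound[OF this, of i j] show ?thesis by (simp add: power_mult_distrib mult.assoc)
  qed
  moreover have "0 \<le> 2*N^2" by simp
  ultimately show ?thesis using that by blast
qed

lemma trace_bounds:
  fixes A M :: mat3
  assumes "\<And>i j. \<bar>A$i$j\<bar> \<le> \<alpha>"
  shows "\<bar>trace A\<bar> \<le> 3*\<alpha>"
    "\<bar>trace (A ** M)\<bar> \<le> \<alpha> * (\<Sum>i\<in>UNIV. \<Sum>j\<in>UNIV. \<bar>M$i$j\<bar>)"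
    "\<bar>trace (A ** A ** M)\<bar> \<le> 3*\<alpha>^2 * (\<Sum>i\<in>UNIV. \<Sum>j\<in>UNIV. \<bar>M$i$j\<bar>)"
proof -
  have a0: "0 \<le> \<alpha>" using assms[of 1 1] by auto
  show "\<bar>trace A\<bar> \<le> 3*\<alpha>"
    unfolding trace_def sum_3 using assms[of 1 1] assms[of 2 2] assms[of 3 3] by linarith
  have g: "\<bar>trace (C ** M)\<bar> \<le> \<beta> * (\<Sum>i\<in>UNIV. \<Sum>j\<in>UNIV. \<bar>M$i$j\<bar>)" if C: "\<And>i j. \<bar>C$i$j\<bar> \<le> \<beta>" for C :: mat3 and \<beta>
  proof -
    have "\<bar>trace (C ** M)\<bar> = \<bar>\<Sum>i\<in>UNIV. \<Sum>k\<in>UNIV. C$i$k * M$k$i\<bar>"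
      by (simp add: trace_def matrix_matrix_mult_def)
    also have "\<dots> \<le> (\<Sum>i\<in>UNIV. \<Sum>k\<in>UNIV. \<bar>C$i$k * M$k$i\<bar>)"
      by (rule order_trans[OF sum_abs]) (auto intro: sum_mono sum_abs)
    also have "\<dots> \<le> (\<Sum>i\<in>UNIV. \<Sum>k\<in>UNIV. \<beta> * \<bar>M$k$i\<bar>)"
      unfolding abs_mult by (intro sum_mono mult_right_mono C) auto
    also have "\<dots> = \<beta> * (\<Sum>i\<in>UNIV. \<Sum>k\<in>UNIV. \<bar>M$k$i\<bar>)" by (simp add: sum_distrib_left)
    also have "(\<Sum>i\<in>UNIV. \<Sum>k\<in>UNIV. \<bar>M$k$i\<bar>) = (\<Sum>i\<in>UNIV. \<Sum>j\<in>UNIV. \<bar>M$i$j\<bar>)" by (rule sum.swap)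
    finally show ?thesis .
  qed
  show "\<bar>trace (A ** M)\<bar> \<le> \<alpha> * (\<Sum>i\<in>UNIV. \<Sum>j\<in>UNIV. \<bar>M$i$j\<bar>)" by (rule g[OF assms])
  have "\<bar>(A ** A)$i$j\<bar> \<le> 3*\<alpha>^2" for i j
  proof -
    have "\<bar>(A ** A)$i$j\<bar> = \<bar>\<Sum>k\<in>UNIV. A$i$k * A$k$j\<bar>" by (simp add: matrix_matrix_mult_def)
    also have "\<dots> \<le> (\<Sum>k\<in>UNIV. \<bar>A$i$k\<bar> * \<bar>A$k$j\<bar>)" by (rule order_trans[OF sum_abs]) (simp add: abs_mult)
    also have "\<dots> \<le> (\<Sum>k\<in>(UNIV::3 set). \<alpha> * \<alpha>)" by (intro sum_mono mult_mono assms a0) auto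
    finally show ?thesis by (simp add: power2_eq_square)
  qed
  from g[OF this] show "\<bar>trace (A ** A ** M)\<bar> \<le> 3*\<alpha>^2 * (\<Sum>i\<in>UNIV. \<Sum>j\<in>UNIV. \<bar>M$i$j\<bar>)" .
qed




lemma trace_scaleR: "trace (c *\<^sub>R (X::mat3)) = c * trace X"
  by (simp add: trace_def sum_distrib_left)

lemma cont_adjX: "continuous_on S (\<lambda>s. adj3 (B + s *\<^sub>R mat 1 :: mat3) $ i $ j)"
  using exhaust_3[of i] exhaust_3[of j]
  apply (elim disjE)
  apply (simp_all add: adj3_def Xe mat1_entries)
  apply (auto intro!: continuous_intros)
  done

lemma cont_detX: "continuous_on S (\<lambda>s. det (B + s *\<^sub>R mat 1 :: mat3))"
  by (auto simp: det_3 Xe mat1_entries intro!: continuous_intros)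

lemma sqrt_lower:
  assumes m: "0 < m" and s: "0 \<le> s" and p: "m * (1+s)^3 \<le> P"
  shows "sqrt m * (1+s) \<le> sqrt P"
proof -
  have "m * (1+s)^2 \<le> m * (1+s)^3"
    using m s by (intro mult_left_mono power_increasing) auto
  then have "m * (1+s)^2 \<le> P" using p by linarith
  then have "sqrt (m * (1+s)^2) \<le> sqrt P" by (rule real_sqrt_le_mono)
  then show ?thesis using s by (simp add: real_sqrt_mult)
qed

lemma trace_tensA:
  assumes P: "pos_def B"
  shows "trace (tensA B) = 1 / sqrt (det B)"
proof -
  obtain m where m: "0 < m" and pge: "\<And>s. 0 \<le> s \<Longrightarrow> m * (1+s)^3 \<le> det (B + s *\<^sub>R mat 1)"
    using posdef_lower[OF P] by blast
  obtain K where K: "0 \<le> K" and Ab: "\<And>s i j. 0 \<le> s \<Longrightarrow> \<bar>adj3 (B + s *\<^sub>R mat 1) $ i $ j\<bar> \<le> K * (1+s)^2"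
    using adjX_bound by blast
  define p where "p s = det (B + s *\<^sub>R mat 1)" for s
  define A where "A s = adj3 (B + s *\<^sub>R mat 1)" for s
  have pge': "m * (1+s)^3 \<le> p s" if "0 \<le> s" for s using pge[OF that] by (simp add: p_def)
  have ppos: "0 < p s" if s: "0 \<le> s" for s
    using pge'[OF s] m s by (smt (verit) zero_less_mult_iff zero_less_power)
  have sq: "sqrt m * (1+s) \<le> sqrt (p s)" if s: "0 \<le> s" for s
    by (rule sqrt_lower[OF m s pge'[OF s]])
  have Ab': "\<bar>A s $ i $ j\<bar> \<le> K * (1+s)^2" if "0 \<le> s" for s i j using Ab[OF that] by (simp add: A_def)
  have den: "sqrt m * m * (1+s)^4 \<le> sqrt (p s) * p s" if s: "0 \<le> s" for s
  proof -
    have "sqrt m * (1+s) * (m * (1+s)^3) \<le> sqrt (p s) * p s"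
      by (rule mult_mono[OF sq[OF s] pge'[OF s]]) (use s m ppos[OF s] in auto)
    then show ?thesis by (simp add: power_numeral_reduce algebra_simps)
  qed
  define gA where "gA s = (1 / (sqrt (p s) * p s)) *\<^sub>R A s" for s
  have eq: "(1 / sqrt (det (B + s *\<^sub>R mat 1))) *\<^sub>R matrix_inv (B + s *\<^sub>R mat 1) = gA s" if s: "0 \<le> s" for s
    using ppos[OF s] by (simp add: gA_def matrix_inv_adj3 p_def A_def)
  have gen_bound: "\<bar>c\<bar> / (sqrt (p s) * p s) \<le> (C / (sqrt m * m)) / (1+s)^2"
    if s: "0 \<le> s" and c: "\<bar>c\<bar> \<le> C * (1+s)^2" for s c C
  proof -
    have "\<bar>c\<bar> / (sqrt (p s) * p s) \<le> (C * (1+s)^2) / (sqrt m * m * (1+s)^4)"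
      by (rule frac_le[OF _ c _ den[OF s]]) (use m s c in auto)
    also have "\<dots> = (C / (sqrt m * m)) / (1+s)^2"
    proof -
      obtain u where u: "u = (1+s)^2" by blast
      have u0: "0 < u" using s u by simp
      have "(1+s)^4 = u * u" unfolding u by (simp add: power_add[symmetric])
      then show ?thesis unfolding u[symmetric] using u0 m by (simp add: field_simps)
    qed
    finally show ?thesis .
  qed
  have int: "gA integrable_on {0..}"
  proof (intro integrable_vec)
    fix i j
    show "(\<lambda>s. gA s $ i $ j) integrable_on {0..}"
    proof (rule bounded_integrable)
      show "continuous_on {0..} (\<lambda>s. gA s $ i $ j)"
        unfolding gA_def A_def p_def using ppos[unfolded p_def] by (auto intro!: continuous_intros cont_adjX cont_detX) (metis less_irrefl)
      show "\<bar>gA s $ i $ j\<bar> \<le> (K / (sqrt m * m)) / (1+s)^2" if s: "0 \<le> s" for s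
        using gen_bound[OF s Ab'[OF s, of i j]] ppos[OF s] by (simp add: gA_def abs_mult abs_div)
    qed
  qed
  have "trace (integral {0..} (\<lambda>s. (1 / sqrt (det (B + s *\<^sub>R mat 1))) *\<^sub>R matrix_inv (B + s *\<^sub>R mat 1)))
      = trace (integral {0..} gA)"
    by (rule arg_cong[where f=trace], rule integral_cong) (use eq in auto)
  also have "\<dots> = integral {0..} (\<lambda>s. trace (gA s))"
    using integral_linear[OF int bl_trace] by (simp add: o_def)
  also have "\<dots> = 2 / sqrt (p 0)"
  proof (rule integral_unique)
    have "((\<lambda>s. trace (A s) / (sqrt (p s) * p s)) has_integral (- (\<lambda>s. -2 / sqrt (p s)) 0)) {0..}"
    proof (rule ftc_inf)
      fix s :: real assume s: "0 \<le> s"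
      have dp: "(p has_real_derivative trace (A s)) (at s within {0..})"
        unfolding p_def A_def by (rule D1)
      show "((\<lambda>s. -2 / sqrt (p s)) has_real_derivative trace (A s) / (sqrt (p s) * p s)) (at s within {0..})"
        using ppos[OF s]
        by (auto intro!: derivative_eq_intros dp simp: field_simps)
      show "\<bar>trace (A s) / (sqrt (p s) * p s)\<bar> \<le> (3*K / (sqrt m * m)) / (1+s)^2"
        using gen_bound[OF s, of "trace (A s)" "3*K"] trace_bounds(1)[of "A s" "K*(1+s)^2", OF Ab'[OF s]]
          ppos[OF s] by (simp add: abs_div abs_mult)
    next
      show "((\<lambda>s. -2 / sqrt (p s)) \<longlongrightarrow> 0) at_top"
      proof (rule Lim_null_comparison)
        show "\<forall>\<^sub>F s in at_top. norm (-2 / sqrt (p s)) \<le> (2 / sqrt m) / (1+s)"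
        proof (rule eventually_at_top_linorderI[of 0])
          fix s :: real assume s: "0 \<le> s"
          have "2 / sqrt (p s) \<le> 2 / (sqrt m * (1+s))"
            by (rule divide_left_mono[OF sq[OF s]]) (use m s ppos[OF s] in auto)
          then show "norm (-2 / sqrt (p s)) \<le> (2 / sqrt m) / (1+s)"
            using ppos[OF s] by simp
        qed
        show "((\<lambda>s::real. (2 / sqrt m) / (1+s)) \<longlongrightarrow> 0) at_top" by real_asymp
      qed
    qed
    moreover have "trace (gA s) = trace (A s) / (sqrt (p s) * p s)" for s
      by (simp add: gA_def trace_scaleR)
    ultimately show "((\<lambda>s. trace (gA s)) has_integral 2 / sqrt (p 0)) {0..}" by simp
  qed
  finally show ?thesis by (simp add: tensA_def trace_scaleR p_def)
qed




lemma trcontr_scaleR: "trace (contr (c *\<^sub>R T) M) = c * trace (contr T M)"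
  by (simp add: trace_def contr_def sum_distrib_left mult.assoc)

lemma scaleR_mm: "((c::real) *\<^sub>R (X::mat3)) ** N = c *\<^sub>R (X ** N)" "X ** (c *\<^sub>R N) = c *\<^sub>R (X ** N)"
  by (simp_all add: vec_eq_iff matrix_matrix_mult_def sum_distrib_left algebra_simps)

lemma sym_adjX:
  assumes "sym_mat B"
  shows "sym_mat (adj3 (B + s *\<^sub>R mat 1))"
  using sym_entries[OF assms]
  unfolding sym_mat_def vec_eq_iff forall_3
  by (simp add: transpose_def adj3_def Xe mat1_entries algebra_simps)

lemma sym_scaleR: "sym_mat X \<Longrightarrow> sym_mat (c *\<^sub>R X)"
  by (simp add: sym_mat_def transpose_def vec_eq_iff)

lemma symz_bound:
  assumes "\<And>a b c d. \<bar>T$a$b$c$d\<bar> \<le> C"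
  shows "\<bar>symz T $ i $ j $ k $ l\<bar> \<le> C"
proof -
  let ?P = "{p. p permutes {0..<4::nat}}"
  let ?x = "[i, j, k, l]"
  have c: "card ?P = 24" using card_permutations[of "{0..<4::nat}" 4] by (simp add: fact_numeral)
  have f: "finite ?P" by (simp add: finite_permutations)
  have "\<bar>\<Sum>p\<in>?P. T $ (?x ! p 0) $ (?x ! p 1) $ (?x ! p 2) $ (?x ! p 3)\<bar> \<le> (\<Sum>p\<in>?P. C)"
    by (rule order_trans[OF sum_abs]) (intro sum_mono assms)
  also have "\<dots> = 24 * C" using c by simp
  finally show ?thesis by (simp add: symz_def Let_def)
qed




lemma trace_tensC:
  assumes P: "pos_def B" and SM: "sym_mat M"
  shows "2 * trace (contr (tensC B) M) = trace (adj3 B ** M) / (sqrt (det B) * det B)"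
proof -
  have SB: "sym_mat B" using P by (simp add: pos_def_def)
  obtain m where m: "0 < m" and pge: "\<And>s. 0 \<le> s \<Longrightarrow> m * (1+s)^3 \<le> det (B + s *\<^sub>R mat 1)"
    using posdef_lower[OF P] by blast
  obtain K where K: "0 \<le> K" and Ab: "\<And>s i j. 0 \<le> s \<Longrightarrow> \<bar>adj3 (B + s *\<^sub>R mat 1) $ i $ j\<bar> \<le> K * (1+s)^2"
    using adjX_bound by blast
  define Mx where "Mx = (\<Sum>i\<in>UNIV. \<Sum>j\<in>UNIV. \<bar>M$i$j\<bar>)"
  have Mx: "0 \<le> Mx" by (simp add: Mx_def sum_nonneg)
  define p where "p s = det (B + s *\<^sub>R mat 1)" for s
  define A where "A s = adj3 (B + s *\<^sub>R mat 1)" for s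
  define q where "q s = trace (A s ** M)" for s
  have pge': "m * (1+s)^3 \<le> p s" if "0 \<le> s" for s using pge[OF that] by (simp add: p_def)
  have ppos: "0 < p s" if s: "0 \<le> s" for s
    using pge'[OF s] m s by (smt (verit) zero_less_mult_iff zero_less_power)
  have sq: "sqrt m * (1+s) \<le> sqrt (p s)" if s: "0 \<le> s" for s
    by (rule sqrt_lower[OF m s pge'[OF s]])
  have Ab': "\<bar>A s $ i $ j\<bar> \<le> K * (1+s)^2" if "0 \<le> s" for s i j using Ab[OF that] by (simp add: A_def)
  have den: "sqrt m * m * (1+s)^4 \<le> sqrt (p s) * p s" if s: "0 \<le> s" for s
  proof -
    have "sqrt m * (1+s) * (m * (1+s)^3) \<le> sqrt (p s) * p s"
      by (rule mult_mono[OF sq[OF s] pge'[OF s]]) (use s m ppos[OF s] in auto)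
    then show ?thesis by (simp add: power_numeral_reduce algebra_simps)
  qed
  have den2: "sqrt m * m * m * (1+s)^6 \<le> sqrt (p s) * p s * p s" if s: "0 \<le> s" for s
  proof -
    have "sqrt m * m * (1+s)^4 * (m * (1+s)^2) \<le> sqrt (p s) * p s * p s"
    proof (rule mult_mono[OF den[OF s]])
      have "m * (1+s)^2 \<le> m * (1+s)^3"
        using m s by (intro mult_left_mono power_increasing) auto
      then show "m * (1+s)^2 \<le> p s" using pge'[OF s] by linarith
    qed (use s m ppos[OF s] in auto)
    then show ?thesis by (simp add: power_numeral_reduce algebra_simps)
  qed
  have gen_bound2: "\<bar>c\<bar> / (sqrt (p s) * p s * p s) \<le> (C / (sqrt m * m * m)) / (1+s)^2"
    if s: "0 \<le> s" and c: "\<bar>c\<bar> \<le> C * (1+s)^4" for s c C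
  proof -
    have "\<bar>c\<bar> / (sqrt (p s) * p s * p s) \<le> (C * (1+s)^4) / (sqrt m * m * m * (1+s)^6)"
      by (rule frac_le[OF _ c _ den2[OF s]]) (use m s c in auto)
    also have "\<dots> = (C / (sqrt m * m * m)) / (1+s)^2"
    proof -
      obtain u where u: "u = (1+s)^2" by blast
      have u0: "0 < u" using s u by simp
      have "(1+s)^4 = u * u" "(1+s)^6 = u * u * u" unfolding u by (simp_all add: power_add[symmetric])
      then show ?thesis unfolding u[symmetric] using u0 m by (simp add: field_simps)
    qed
    finally show ?thesis .
  qed
  have trA: "\<bar>trace (A s)\<bar> \<le> 3 * (K * (1+s)^2)" if s: "0 \<le> s" for s
    using trace_bounds(1)[of "A s", OF Ab'[OF s]] .
  have qb: "\<bar>q s\<bar> \<le> K * (1+s)^2 * Mx" if s: "0 \<le> s" for s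
    using trace_bounds(2)[of "A s", OF Ab'[OF s]] by (simp add: q_def Mx_def)
  have Tb: "\<bar>trace (A s ** A s ** M)\<bar> \<le> 3 * (K * (1+s)^2)^2 * Mx" if s: "0 \<le> s" for s
    using trace_bounds(3)[of "A s", OF Ab'[OF s]] by (simp add: Mx_def)
  define R where "R s = (1 / p s) *\<^sub>R A s" for s
  define gC where "gC s = (1 / sqrt (p s)) *\<^sub>R symz (tprod (R s) (R s))" for s
  have eq: "(1 / sqrt (det (B + s *\<^sub>R mat 1))) *\<^sub>R
        symz (tprod (matrix_inv (B + s *\<^sub>R mat 1)) (matrix_inv (B + s *\<^sub>R mat 1))) = gC s"
    if s: "0 \<le> s" for s
    using ppos[OF s] by (simp add: gC_def R_def matrix_inv_adj3 p_def A_def)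
  have Rb: "\<bar>R s $ a $ b\<bar> \<le> K * (1+s)^2 / p s" if s: "0 \<le> s" for s a b
    using Ab'[OF s, of a b] ppos[OF s] by (simp add: R_def abs_mult divide_right_mono)
  have int: "gC integrable_on {0..}"
  proof (intro integrable_vec)
    fix i j k l
    show "(\<lambda>s. gC s $ i $ j $ k $ l) integrable_on {0..}"
    proof (rule bounded_integrable)
      show "continuous_on {0..} (\<lambda>s. gC s $ i $ j $ k $ l)"
        unfolding gC_def R_def A_def p_def symz_def tprod_def Let_def
        using ppos[unfolded p_def]
        by (auto intro!: continuous_intros cont_adjX cont_detX) (metis less_irrefl)+
      show "\<bar>gC s $ i $ j $ k $ l\<bar> \<le> (K^2 / (sqrt m * m * m)) / (1+s)^2" if s: "0 \<le> s" for s
      proof -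
        have "\<bar>tprod (R s) (R s) $ a $ b $ c $ d\<bar> \<le> (K * (1+s)^2 / p s)^2" for a b c d
        proof -
          have "\<bar>R s $ a $ b\<bar> * \<bar>R s $ c $ d\<bar> \<le> (K * (1+s)^2 / p s) * (K * (1+s)^2 / p s)"
            by (rule mult_mono) (use Rb[OF s] K ppos[OF s] in auto)
          then show ?thesis by (simp add: tprod_def abs_mult power2_eq_square)
        qed
        from symz_bound[OF this]
        have sb: "\<bar>symz (tprod (R s) (R s)) $ i $ j $ k $ l\<bar> \<le> (K * (1+s)^2 / p s)^2" .
        have "\<bar>gC s $ i $ j $ k $ l\<bar> = \<bar>symz (tprod (R s) (R s)) $ i $ j $ k $ l\<bar> / sqrt (p s)"
          using ppos[OF s] by (simp add: gC_def abs_mult)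
        also have "\<dots> \<le> (K * (1+s)^2 / p s)^2 / sqrt (p s)"
          using sb ppos[OF s] by (simp add: divide_right_mono)
        also have "\<dots> = (K^2 * (1+s)^4) / (sqrt (p s) * p s * p s)"
        proof -
          obtain v where v: "v = (1+s)^2" by blast
          have "(1+s)^4 = v * v" unfolding v by (simp add: power_add[symmetric])
          then show ?thesis unfolding v[symmetric] using ppos[OF s] by (simp add: field_simps power2_eq_square)
        qed
        also have "\<dots> \<le> (K^2 / (sqrt m * m * m)) / (1+s)^2"
          using gen_bound2[OF s, of "K^2 * (1+s)^4" "K^2"] by simp
        finally show ?thesis .
      qed
    qed
  qed
  define h where "h s = (trace (A s) * q s + 2 * trace (A s ** A s ** M)) / (2 * (sqrt (p s) * p s * p s))" for s
  have Lg: "trace (contr (gC s) M) = (2/3) * h s" if s: "0 \<le> s" for s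
  proof -
    have sR: "sym_mat (R s)" unfolding R_def A_def by (intro sym_scaleR sym_adjX SB)
    have "trace (contr (gC s) M) = (1 / sqrt (p s)) *
       ((trace (R s) * trace (R s ** M) + 2 * trace (R s ** R s ** M)) / 3)"
      by (simp add: gC_def trcontr_scaleR symz_trace[OF sR SM])
    also have "\<dots> = (2/3) * h s"
      using ppos[OF s] by (simp add: R_def h_def q_def scaleR_mm trace_scaleR field_simps)
    finally show ?thesis .
  qed
  have "trace (contr (integral {0..} (\<lambda>s. (1 / sqrt (det (B + s *\<^sub>R mat 1))) *\<^sub>R
        symz (tprod (matrix_inv (B + s *\<^sub>R mat 1)) (matrix_inv (B + s *\<^sub>R mat 1))))) M)
      = trace (contr (integral {0..} gC) M)"
    by (rule arg_cong[where f="\<lambda>T. trace (contr T M)"], rule integral_cong) (use eq in auto)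
  also have "\<dots> = integral {0..} (\<lambda>s. trace (contr (gC s) M))"
    using integral_linear[OF int bl_trcontr[of M]] by (simp add: o_def)
  also have "\<dots> = integral {0..} (\<lambda>s. (2/3) * h s)"
    by (rule integral_cong) (use Lg in auto)
  also have "\<dots> = (2/3) * (q 0 / (sqrt (p 0) * p 0))"
  proof (rule integral_unique)
    have "(h has_integral (- (\<lambda>s. - q s / (sqrt (p s) * p s)) 0)) {0..}"
    proof (rule ftc_inf)
      fix s :: real assume s: "0 \<le> s"
      have dp: "(p has_real_derivative trace (A s)) (at s within {0..})"
        unfolding p_def A_def by (rule D1)
      have dq: "(q has_real_derivative (trace (A s) * q s - trace (A s ** A s ** M)) / p s) (at s within {0..})"
      proof -
        have "(q has_real_derivative trace (B + s *\<^sub>R mat 1) * trace M - trace ((B + s *\<^sub>R mat 1) ** M)) (at s within {0..})"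
          unfolding q_def A_def by (rule D2)
        moreover have "trace (B + s *\<^sub>R mat 1) * trace M - trace ((B + s *\<^sub>R mat 1) ** M) =
            (trace (A s) * q s - trace (A s ** A s ** M)) / p s"
          using ID[of "B + s *\<^sub>R mat 1" M] ppos[OF s] by (simp add: A_def q_def p_def field_simps)
        ultimately show ?thesis by simp
      qed
      show "((\<lambda>s. - q s / (sqrt (p s) * p s)) has_real_derivative h s) (at s within {0..})"
        using ppos[OF s]
        by (auto intro!: derivative_eq_intros dp dq simp: h_def field_simps)
      show "\<bar>h s\<bar> \<le> ((9 * K^2 * Mx) / 2 / (sqrt m * m * m)) / (1+s)^2"
      proof -
        have "\<bar>trace (A s) * q s + 2 * trace (A s ** A s ** M)\<bar> \<le>
            3 * (K * (1+s)^2) * (K * (1+s)^2 * Mx) + 2 * (3 * (K * (1+s)^2)^2 * Mx)"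
        proof -
          have a1: "\<bar>trace (A s) * q s\<bar> \<le> 3 * (K * (1+s)^2) * (K * (1+s)^2 * Mx)"
            unfolding abs_mult by (rule mult_mono[OF trA[OF s] qb[OF s]]) (use K s in auto)
          have a2: "\<bar>trace (A s) * q s + 2 * trace (A s ** A s ** M)\<bar> \<le>
              \<bar>trace (A s) * q s\<bar> + 2 * \<bar>trace (A s ** A s ** M)\<bar>"
            using abs_triangle_ineq[of "trace (A s) * q s" "2 * trace (A s ** A s ** M)"] by (simp add: abs_mult)
          show ?thesis using a1 a2 Tb[OF s] by linarith
        qed
        also have "\<dots> = ((9 * K^2 * Mx) / 2) * (1+s)^4 * 2" by (simp add: power2_eq_square power_numeral_reduce algebra_simps)
        finally have nb: "\<bar>(trace (A s) * q s + 2 * trace (A s ** A s ** M)) / 2\<bar> \<le> ((9 * K^2 * Mx) / 2) * (1+s)^4"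
          by (simp add: mult_ac)
        have "h s = ((trace (A s) * q s + 2 * trace (A s ** A s ** M)) / 2) / (sqrt (p s) * p s * p s)"
          by (simp add: h_def)
        then have "\<bar>h s\<bar> = \<bar>(trace (A s) * q s + 2 * trace (A s ** A s ** M)) / 2\<bar> / (sqrt (p s) * p s * p s)"
          using ppos[OF s] by (simp add: abs_div)
        also have "\<dots> \<le> ((9 * K^2 * Mx) / 2 / (sqrt m * m * m)) / (1+s)^2"
          by (rule gen_bound2[OF s nb])
        finally show ?thesis .
      qed
    next
      show "((\<lambda>s. - q s / (sqrt (p s) * p s)) \<longlongrightarrow> 0) at_top"
      proof (rule Lim_null_comparison)
        show "\<forall>\<^sub>F s in at_top. norm (- q s / (sqrt (p s) * p s)) \<le> (K * Mx / (sqrt m * m)) / (1+s)^2"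
        proof (rule eventually_at_top_linorderI[of 0])
          fix s :: real assume s: "0 \<le> s"
          have "\<bar>q s\<bar> / (sqrt (p s) * p s) \<le> (K * Mx / (sqrt m * m)) / (1+s)^2"
          proof -
            have "\<bar>q s\<bar> / (sqrt (p s) * p s) \<le> (K * Mx * (1+s)^2) / (sqrt m * m * (1+s)^4)"
              by (rule frac_le[OF _ _ _ den[OF s]]) (use qb[OF s] m s K Mx in \<open>auto simp: algebra_simps\<close>)
            also have "\<dots> = (K * Mx / (sqrt m * m)) / (1+s)^2"
            proof -
              obtain u where u: "u = (1+s)^2" by blast
              have u0: "0 < u" using s u by simp
              have "(1+s)^4 = u * u" unfolding u by (simp add: power_add[symmetric])
              then show ?thesis unfolding u[symmetric] using u0 m by (simp add: field_simps)
            qed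
            finally show ?thesis .
          qed
          then show "norm (- q s / (sqrt (p s) * p s)) \<le> (K * Mx / (sqrt m * m)) / (1+s)^2"
            using ppos[OF s] by (simp add: abs_div abs_mult)
        qed
        show "((\<lambda>s::real. (K * Mx / (sqrt m * m)) / (1+s)^2) \<longlongrightarrow> 0) at_top" by real_asymp
      qed
    qed
    from has_integral_mult_right[OF this, of "2/3"]
    show "((\<lambda>s. (2/3) * h s) has_integral (2/3) * (q 0 / (sqrt (p 0) * p 0))) {0..}" by simp
  qed
  finally show ?thesis by (simp add: tensC_def trcontr_scaleR q_def p_def A_def)
qed




theorem mainTheorem6:
  shows "(\<forall>B M :: mat3. pos_def B \<and> det B = 1 \<and> sym_mat M \<longrightarrow>
            trace (matrix_inv B ** M) = 2 * trace (contr (tensC B) M))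
       \<and> (\<forall>(Bt :: real \<Rightarrow> mat3) (I :: real set).
            is_interval I \<and> 0 \<in> I \<and>
            (\<forall>t\<in>I. Bt differentiable (at t within I)) \<and>
            (\<forall>t\<in>I. pos_def (Bt t)) \<and> det (Bt 0) = 1 \<longrightarrow>
            ((\<exists>c. \<forall>t\<in>I. trace (tensA (Bt t)) = c) \<longleftrightarrow> (\<exists>c. \<forall>t\<in>I. det (Bt t) = c)))"
proof (intro conjI allI impI)
  fix B M :: mat3
  assume h: "pos_def B \<and> det B = 1 \<and> sym_mat M"
  then have "matrix_inv B = adj3 B" by (simp add: matrix_inv_adj3)
  then show "trace (matrix_inv B ** M) = 2 * trace (contr (tensC B) M)"
    using trace_tensC[of B M] h by simp
next
  fix Bt :: "real \<Rightarrow> mat3" and I :: "real set"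
  assume h: "is_interval I \<and> 0 \<in> I \<and> (\<forall>t\<in>I. Bt differentiable (at t within I)) \<and>
            (\<forall>t\<in>I. pos_def (Bt t)) \<and> det (Bt 0) = 1"
  have tr: "trace (tensA (Bt t)) = 1 / sqrt (det (Bt t))" and dp: "0 < det (Bt t)" if "t \<in> I" for t
    using trace_tensA posdef_coeffs(3) h that by blast+
  show "(\<exists>c. \<forall>t\<in>I. trace (tensA (Bt t)) = c) \<longleftrightarrow> (\<exists>c. \<forall>t\<in>I. det (Bt t) = c)"
  proof
    assume "\<exists>c. \<forall>t\<in>I. trace (tensA (Bt t)) = c"
    then obtain c where c: "\<forall>t\<in>I. trace (tensA (Bt t)) = c" by blast
    have "det (Bt t) = det (Bt 0)" if t: "t \<in> I" for t
    proof -
      have "1 / sqrt (det (Bt t)) = 1 / sqrt (det (Bt 0))"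
        using c tr t h by metis
      then have "sqrt (det (Bt t)) = sqrt (det (Bt 0))" by simp
      then show ?thesis by simp
    qed
    then show "\<exists>c. \<forall>t\<in>I. det (Bt t) = c" by blast
  next
    assume "\<exists>c. \<forall>t\<in>I. det (Bt t) = c"
    then obtain c where c: "\<forall>t\<in>I. det (Bt t) = c" by blast
    then show "\<exists>c. \<forall>t\<in>I. trace (tensA (Bt t)) = c" using tr by auto
  qed
qed


end
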